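(* Let $\mathbb Q$ be a probability measure on $(\Omega,\mathcal F)$ equivalent to $\mathbb P$, and let $(\mathcal B_n)_{n\in\mathbb N_0}$ be $\sigma$-subfields. Then $\mathcal B_n\to\mathcal B_0$ in the almost-sure sense under $\mathbb P$ if and only if $\mathcal B_n\to\mathcal B_0$ in the almost-sure sense under $\mathbb Q$.
   Context: Let $(\Omega,\mathcal F,\mathbb P)$ be a (not necessarily complete) probability space and $\mathcal N:=\{F\in\mathcal F:\mathbb P(F)=0\}$. A $\sigma$-subfield is a sub-$\sigma$-field $\mathcal A\subset\mathcal F$ with $\mathcal A=\sigma(\mathcal A\cup\mathcal N)$. For a probability measure $\mathbb R\sim\mathbb P$ and a $\sigma$-subfield $\mathcal A$, $\mathbb R_{\mathcal A}f:=\mathbb E^{\mathbb R}[f\mid\mathcal A]$. We say $\mathcal B_n\to\mathcal B_0$ in the almost-sure sense under $\mathbb R$ if for every $f\in L^1(\mathbb R)$, $\mathbb R$-a.s. $\mathbb R_{\mathcal B_n}f\to\mathbb R_{\mathcal B_0}f$ as $n\to\infty$. *)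

theory Defs
  imports "HOL-Probability.Probability"
begin

text \<open>A sigma-subfield of the probability space M: a sub-sigma-algebra A of the sets of M
  (represented as a measure whose sets form the sub-sigma-algebra; its measure component is
  irrelevant for conditional expectations) with A = sigma(A \<union> N), N the M-null sets.\<close>
definition sigma_subfield :: "'a measure \<Rightarrow> 'a measure \<Rightarrow> bool" where
  "sigma_subfield M A \<longleftrightarrow> subalgebra M A \<and>
     sets A = sigma_sets (space M) (sets A \<union> null_sets M)"

definition as_converges :: "'a measure \<Rightarrow> (nat \<Rightarrow> 'a measure) \<Rightarrow> bool" where
  "as_converges R B \<longleftrightarrow>
     (\<forall>f::'a \<Rightarrow> real. integrable R f \<longrightarrow>
        (AE x in R. (\<lambda>n. real_cond_exp R (B n) f x) \<longlonglongrightarrow> real_cond_exp R (B 0) f x))"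

end

theory Submission
  imports Defs
begin

lemma sfs_of_prob:
  assumes "prob_space M" "subalgebra M F"
  shows "sigma_finite_subalgebra M F"
proof -
  interpret prob_space M by fact
  have "finite_measure_subalgebra M F"
    unfolding finite_measure_subalgebra_def finite_measure_subalgebra_axioms_def
    using assms(2) finite_measure_axioms by simp
  then show ?thesis by (rule finite_measure_subalgebra_is_sigma_finite)
qed

lemma bayes:
  assumes PP: "prob_space P" and PQ: "prob_space Q"
    and D[measurable]: "D \<in> borel_measurable P" and Dnn: "\<And>x. 0 \<le> D x"
    and Qd: "Q = density P (\<lambda>x. ennreal (D x))"
    and Dpos: "AE x in P. 0 < D x"
    and subP: "subalgebra P F" and subQ: "subalgebra Q F"
    and fint: "integrable Q f"
  shows "AE x in P. real_cond_exp Q F f x =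
     real_cond_exp P F (\<lambda>x. D x * f x) x / real_cond_exp P F D x"
proof -
  interpret SP: sigma_finite_subalgebra P F using sfs_of_prob[OF PP subP] .
  interpret SQ: sigma_finite_subalgebra Q F using sfs_of_prob[OF PQ subQ] .
  interpret Q: prob_space Q by fact
  have sQ: "sets Q = sets P" using Qd by simp
  have FP: "\<And>A. A \<in> sets F \<Longrightarrow> A \<in> sets P" using subP unfolding subalgebra_def by auto
  define h where "h = real_cond_exp Q F f"
  have hF[measurable]: "h \<in> borel_measurable F" unfolding h_def by simp
  have hP[measurable]: "h \<in> borel_measurable P"
    using measurable_from_subalg[OF subP hF] .
  have fQ: "f \<in> borel_measurable Q" using fint by auto
  have fP[measurable]: "f \<in> borel_measurable P" using fQ sQ measurable_cong_sets by blast
  have intDens: "integrable Q g \<longleftrightarrow> integrable P (\<lambda>x. D x * g x)" if "g \<in> borel_measurable P" for g::"'a\<Rightarrow>real"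
    using integrable_density[of g P D] Dnn Qd that by (simp add: AE_I2)
  have intgDens: "integral\<^sup>L Q g = integral\<^sup>L P (\<lambda>x. D x * g x)" if "g \<in> borel_measurable P" for g::"'a\<Rightarrow>real"
    using integral_density[of g P D] Dnn Qd that by (simp add: AE_I2)
  have hQ: "integrable Q h" unfolding h_def using SQ.real_cond_exp_int(1)[OF fint] .
  have hDint: "integrable P (\<lambda>x. h x * D x)" using intDens[OF hP] hQ by (simp add: mult.commute)
  have Dfint: "integrable P (\<lambda>x. D x * f x)" using intDens[OF fP] fint by simp
  have Dint: "integrable P D" using intDens[of "\<lambda>x. 1"] by simp
  have e1: "AE x in P. real_cond_exp P F (\<lambda>x. h x * D x) x = h x * real_cond_exp P F D x"
    by (rule SP.real_cond_exp_mult) (use hDint in auto)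
  have e2: "AE x in P. real_cond_exp P F (\<lambda>x. h x * D x) x = real_cond_exp P F (\<lambda>x. D x * f x) x"
  proof (rule SP.real_cond_exp_charact)
    fix A assume A: "A \<in> sets F"
    then have AP[measurable]: "A \<in> sets P" by (rule FP)
    have "(\<integral>x\<in>A. h x * D x \<partial>P) = (\<integral>x. D x * (indicator A x * h x) \<partial>P)"
      unfolding set_lebesgue_integral_def by (intro Bochner_Integration.integral_cong) auto
    also have "\<dots> = (\<integral>x. indicator A x * h x \<partial>Q)" by (rule intgDens[symmetric]) simp
    also have "\<dots> = (\<integral>x\<in>A. h x \<partial>Q)" unfolding set_lebesgue_integral_def by simp
    also have "\<dots> = (\<integral>x\<in>A. f x \<partial>Q)" unfolding h_def using SQ.real_cond_exp_intA[OF fint A] by simp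
    also have "\<dots> = (\<integral>x. indicator A x * f x \<partial>Q)" unfolding set_lebesgue_integral_def by simp
    also have "\<dots> = (\<integral>x. D x * (indicator A x * f x) \<partial>P)" by (rule intgDens) simp
    also have "\<dots> = (\<integral>x\<in>A. D x * f x \<partial>P)"
      unfolding set_lebesgue_integral_def by (intro Bochner_Integration.integral_cong) auto
    also have "\<dots> = (\<integral>x\<in>A. real_cond_exp P F (\<lambda>x. D x * f x) x \<partial>P)"
      using SP.real_cond_exp_intA[OF Dfint A] .
    finally show "(\<integral>x\<in>A. h x * D x \<partial>P) = (\<integral>x\<in>A. real_cond_exp P F (\<lambda>x. D x * f x) x \<partial>P)" .
  next
    show "integrable P (\<lambda>x. h x * D x)" by (rule hDint)
    show "integrable P (real_cond_exp P F (\<lambda>x. D x * f x))" using SP.real_cond_exp_int(1)[OF Dfint] .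
    show "real_cond_exp P F (\<lambda>x. D x * f x) \<in> borel_measurable F" by simp
  qed
  have e3: "AE x in P. real_cond_exp P F D x > 0"
    by (rule SP.real_cond_exp_gr_c[OF Dint Dpos])
  show ?thesis using e1 e2 e3 unfolding h_def by eventually_elim (auto simp: field_simps)
qed

lemma one_dir:
  assumes PP: "prob_space P" and PQ: "prob_space Q"
    and sQ: "sets Q = sets P"
    and acPQ: "absolutely_continuous P Q" and acQP: "absolutely_continuous Q P"
    and sub: "\<And>n. subalgebra P (B n)"
    and conv: "as_converges P B"
  shows "as_converges Q B"
  unfolding as_converges_def
proof (intro allI impI)
  fix f :: "'a \<Rightarrow> real" assume fint: "integrable Q f"
  interpret P: prob_space P by fact
  interpret Q: prob_space Q by fact
  have spQ: "space Q = space P" using sets_eq_imp_space_eq[OF sQ] .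
  have subQ: "subalgebra Q (B n)" for n using sub[of n] sQ spQ unfolding subalgebra_def by simp
  obtain D where D[measurable]: "D \<in> borel_measurable P"
    and DRN: "AE x in P. RN_deriv P Q x = ennreal (D x)"
    and DposQ: "AE x in Q. 0 < D x" and Dnn: "\<And>x. 0 \<le> D x"
    using P.real_RN_deriv[OF Q.finite_measure_axioms acPQ sQ] by blast
  have Qd: "Q = density P (\<lambda>x. ennreal (D x))"
    using P.density_RN_deriv[OF acPQ sQ] density_cong[OF borel_measurable_RN_deriv _ DRN] by simp
  have Dpos: "AE x in P. 0 < D x" using absolutely_continuous_AE[OF sQ[symmetric] acQP DposQ] .
  have fQ: "f \<in> borel_measurable Q" using fint by auto
  have fP[measurable]: "f \<in> borel_measurable P" using fQ sQ measurable_cong_sets by blast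
  have Dfint: "integrable P (\<lambda>x. D x * f x)"
    using integrable_density[of f P D] Dnn Qd fint by (simp add: AE_I2)
  have i1: "integrable Q (\<lambda>x. 1::real)" by simp
  have i2: "integrable (density P (\<lambda>x. ennreal (D x))) (\<lambda>x. 1::real) \<longleftrightarrow> integrable P (\<lambda>x. D x *\<^sub>R (1::real))"
    by (rule integrable_density) (auto simp: Dnn)
  have Dint: "integrable P D" using i1 i2 unfolding Qd[symmetric] by simp
  have c1: "AE x in P. (\<lambda>n. real_cond_exp P (B n) (\<lambda>x. D x * f x) x) \<longlonglongrightarrow> real_cond_exp P (B 0) (\<lambda>x. D x * f x) x"
    using conv Dfint unfolding as_converges_def by blast
  have c2: "AE x in P. (\<lambda>n. real_cond_exp P (B n) D x) \<longlonglongrightarrow> real_cond_exp P (B 0) D x"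
    using conv Dint unfolding as_converges_def by blast
  have bay: "AE x in P. \<forall>n. real_cond_exp Q (B n) f x =
     real_cond_exp P (B n) (\<lambda>x. D x * f x) x / real_cond_exp P (B n) D x"
    unfolding AE_all_countable
    using bayes[OF PP PQ D Dnn Qd Dpos sub subQ fint] by blast
  have pos: "AE x in P. real_cond_exp P (B 0) D x > 0"
    using sfs_of_prob[OF PP sub[of 0]] sigma_finite_subalgebra.real_cond_exp_gr_c[OF _ Dint Dpos] by blast
  have "AE x in P. (\<lambda>n. real_cond_exp Q (B n) f x) \<longlonglongrightarrow> real_cond_exp Q (B 0) f x"
    using c1 c2 bay pos
  proof eventually_elim
    case (elim x)
    then show ?case by (simp add: tendsto_divide)
  qed
  then show "AE x in Q. (\<lambda>n. real_cond_exp Q (B n) f x) \<longlonglongrightarrow> real_cond_exp Q (B 0) f x"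
    using absolutely_continuous_AE[OF sQ acPQ] by blast
qed

theorem proposition4p6:
  fixes P Q :: "'a measure" and B :: "nat \<Rightarrow> 'a measure"
  assumes "prob_space P" and "prob_space Q"
    and "sets Q = sets P"
    and "absolutely_continuous P Q" and "absolutely_continuous Q P"
    and "\<And>n. sigma_subfield P (B n)"
  shows "as_converges P B \<longleftrightarrow> as_converges Q B"
proof -
  have sub: "subalgebra P (B n)" for n using assms(6)[of n] unfolding sigma_subfield_def by blast
  have spQ: "space Q = space P" using sets_eq_imp_space_eq[OF assms(3)] .
  have subQ: "subalgebra Q (B n)" for n using sub[of n] assms(3) spQ unfolding subalgebra_def by simp
  note d1 = one_dir[of P Q B, OF assms(1,2,3,4,5) sub]
  note d2 = one_dir[of Q P B, OF assms(2,1) assms(3)[symmetric] assms(5,4) subQ]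
  show ?thesis
    using d1 d2 by blast
qed

end
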